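(* Under the standing assumptions, writing (R1) for $\mathscr{R}(A^*AB)=\mathscr{R}(B)$ and (R2) for $\mathscr{R}(CC^*B^* )=\mathscr{R}(B^* )$, the following hold. (57) $M^\dagger\in\{C^{-1}B^{(1)}A^{-1}\}$. (58) $M^\dagger\in\{C^{-1}B^{(1,2)}A^{-1}\}$. (59) $M^\dagger\in\{C^{-1}B^{(1,3)}A^{-1}\}\Leftrightarrow$ (R1). (60) $M^\dagger\in\{C^{-1}B^{(1,4)}A^{-1}\}\Leftrightarrow$ (R2). (61) $M^\dagger\in\{C^{-1}B^{(1,2,3)}A^{-1}\}\Leftrightarrow$ (R1). (62) $M^\dagger\in\{C^{-1}B^{(1,2,4)}A^{-1}\}\Leftrightarrow$ (R2). (63) $M^\dagger\in\{C^{-1}B^{(1,3,4)}A^{-1}\}\Leftrightarrow$ (R1) and (R2). (64) The following are equivalent: (i) $M^\dagger=C^{-1}B^\dagger A^{-1}$; (ii) (R1) and (R2); (iii) $\mathscr{R}(AA^*M)=\mathscr{R}(M)$ and $\mathscr{R}(C^*CM^* )=\mathscr{R}(M^* )$; (iv) $(A^*AB)(A^*AB)^\dagger=BB^\dagger$ and $(BCC^* )^\dagger(BCC^* )=B^\dagger B$; (v) $A^*ABB^*$ and $B^*BCC^*$ are both EP; (vi) $AA^*MM^*$ and $M^*MC^*C$ are both EP.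
   Context: Standing assumptions: $m,n\ge1$; $A\in\mathbb{C}^{m\times m}$ and $C\in\mathbb{C}^{n\times n}$ are nonsingular; $B\in\mathbb{C}^{m\times n}$; $M=ABC$. For a complex matrix $X$, $X^*$ is its conjugate transpose, $r(X)$ its rank and $\mathscr{R}(X)$ its column space. A square matrix $X$ is called EP (range Hermitian) if $\mathscr{R}(X^* )=\mathscr{R}(X)$. For $X\in\mathbb{C}^{p\times q}$, a matrix $G\in\mathbb{C}^{q\times p}$ is called an $\{i,\ldots,j\}$-generalized inverse of $X$ (written $X^{(i,\ldots,j)}$) if it satisfies the equations numbered $i,\ldots,j$ among the four Penrose equations (i) $XGX=X$, (ii) $GXG=G$, (iii) $(XG)^*=XG$, (iv) $(GX)^*=GX$; $\{X^{(i,\ldots,j)}\}$ denotes the set of all such $G$. The Moore–Penrose inverse $X^\dagger$ is the unique matrix satisfying all four equations. For a type $(k,\ldots,l)$, $\{C^{-1}B^{(k,\ldots,l)}A^{-1}\}:=\{C^{-1}GA^{-1}: G\in\{B^{(k,\ldots,l)}\}\}$. *)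

theory Defs
  imports "Jordan_Normal_Form.Schur_Decomposition"
begin

abbreviation cadj :: "complex mat \<Rightarrow> complex mat" where
  "cadj X \<equiv> mat_adjoint X"

definition colspace :: "complex mat \<Rightarrow> complex vec set" where
  "colspace X = {X *\<^sub>v x | x. x \<in> carrier_vec (dim_col X)}"

definition mat_inv :: "complex mat \<Rightarrow> complex mat" where
  "mat_inv X = (SOME Y. Y \<in> carrier_mat (dim_row X) (dim_row X) \<and>
                        X * Y = 1\<^sub>m (dim_row X) \<and> Y * X = 1\<^sub>m (dim_row X))"

text \<open>The set of {i,...,j}-generalized inverses of X, indexed by the set I of
  Penrose equations to be satisfied.\<close>
definition gen_inv :: "nat set \<Rightarrow> complex mat \<Rightarrow> complex mat set" where
  "gen_inv I X = {G. G \<in> carrier_mat (dim_col X) (dim_row X) \<and>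
     (1 \<in> I \<longrightarrow> X * G * X = X) \<and>
     (2 \<in> I \<longrightarrow> G * X * G = G) \<and>
     (3 \<in> I \<longrightarrow> cadj (X * G) = X * G) \<and>
     (4 \<in> I \<longrightarrow> cadj (G * X) = G * X)}"

definition mp_inv :: "complex mat \<Rightarrow> complex mat" where
  "mp_inv X = (THE G. G \<in> gen_inv {1,2,3,4} X)"

definition EP :: "complex mat \<Rightarrow> bool" where
  "EP X \<longleftrightarrow> colspace (cadj X) = colspace X"

definition trans_gen_inv :: "complex mat \<Rightarrow> nat set \<Rightarrow> complex mat \<Rightarrow> complex mat \<Rightarrow> complex mat set" where
  "trans_gen_inv C I B A = {mat_inv C * G * mat_inv A | G. G \<in> gen_inv I B}"

end

theory Submission
  imports Defs
begin
declare minus_carrier_mat[simp]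
lemma cadj_dims[simp]: "dim_row (cadj X) = dim_col X" "dim_col (cadj X) = dim_row X"
  unfolding mat_adjoint_def by auto
lemma cadj_index[simp]: "i < dim_col X \<Longrightarrow> j < dim_row X \<Longrightarrow> cadj X $$ (i,j) = cnj (X $$ (j,i))"
  unfolding mat_adjoint_def by (auto simp: mat_of_rows_def)
lemma cadj_carrier[simp]: "X \<in> carrier_mat a b \<Longrightarrow> cadj X \<in> carrier_mat b a"
  by (metis cadj_dims carrier_matD carrier_matI)
lemma cadj_cadj[simp]: "cadj (cadj X) = X"
  by (rule eq_matI) simp_all

lemma cadj_mult: "dim_col X = dim_row Y \<Longrightarrow> cadj (X * Y) = cadj Y * cadj X"
proof (rule eq_matI)
  fix i j assume d: "dim_col X = dim_row Y" and i: "i < dim_row (cadj Y * cadj X)" and j: "j < dim_col (cadj Y * cadj X)"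
  have "cadj (X * Y) $$ (i, j) = cnj (\<Sum>k<dim_row Y. X $$ (j,k) * Y $$ (k,i))"
    using i j d by (simp add: scalar_prod_def atLeast0LessThan)
  also have "\<dots> = (\<Sum>k<dim_row Y. cnj (Y $$ (k,i)) * cnj (X $$ (j,k)))"
    by (simp add: mult.commute)
  also have "\<dots> = (cadj Y * cadj X) $$ (i,j)"
    using i j d by (simp add: scalar_prod_def atLeast0LessThan)
  finally show "cadj (X * Y) $$ (i, j) = (cadj Y * cadj X) $$ (i,j)" .
qed simp_all

lemma cadj_one[simp]: "cadj (1\<^sub>m k) = 1\<^sub>m k"
  by (rule eq_matI) simp_all

lemma cadj_zero[simp]: "cadj (0\<^sub>m a b) = 0\<^sub>m b a"
  by (rule eq_matI) simp_all

lemma cadj_add: "dim_row X = dim_row Y \<Longrightarrow> dim_col X = dim_col Y \<Longrightarrow> cadj (X + Y) = cadj X + cadj Y"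
  by (rule eq_matI) simp_all

lemma cadj_minus: "dim_row X = dim_row Y \<Longrightarrow> dim_col X = dim_col Y \<Longrightarrow> cadj (X - Y) = cadj X - cadj Y"
  by (rule eq_matI) simp_all

lemma cadj_smult: "cadj (r \<cdot>\<^sub>m X) = cnj r \<cdot>\<^sub>m cadj X"
  by (rule eq_matI) simp_all

lemma massoc: "dim_col A = dim_row B \<Longrightarrow> dim_col B = dim_row C \<Longrightarrow> A * B * C = A * (B * (C::complex mat))"
proof -
  assume "dim_col A = dim_row B" "dim_col B = dim_row C"
  have a: "A \<in> carrier_mat (dim_row A) (dim_col A)" by (rule carrier_matI) (rule refl)+
  have b: "B \<in> carrier_mat (dim_col A) (dim_col B)" using \<open>dim_col A = dim_row B\<close> by (intro carrier_matI) simp_all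
  have c: "C \<in> carrier_mat (dim_col B) (dim_col C)" using \<open>dim_col B = dim_row C\<close> by (intro carrier_matI) simp_all
  show ?thesis by (rule assoc_mult_mat[OF a b c])
qed

lemma mone_left: "dim_row (X::complex mat) = k \<Longrightarrow> 1\<^sub>m k * X = X"
proof -
  assume "dim_row X = k"
  hence "X \<in> carrier_mat k (dim_col X)" by (intro carrier_matI) simp_all
  thus ?thesis by (rule left_mult_one_mat)
qed
lemma mone_right: "dim_col (X::complex mat) = k \<Longrightarrow> X * 1\<^sub>m k = X"
proof -
  assume "dim_col X = k"
  hence "X \<in> carrier_mat (dim_row X) k" by (intro carrier_matI) simp_all
  thus ?thesis by (rule right_mult_one_mat)
qed

lemma smult_smult_mat: "(a::complex) \<cdot>\<^sub>m (b \<cdot>\<^sub>m X) = (a * b) \<cdot>\<^sub>m X"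
  by (rule eq_matI) simp_all

lemma smult_one_mat'[simp]: "(1::complex) \<cdot>\<^sub>m X = X"
  by (rule eq_matI) simp_all

lemma if_one_mult: "(if P then 1 else 0) * (x::complex) = (if P then x else 0)" by simp
lemma mult_if_one: "(x::complex) * (if P then 1 else 0) = (if P then x else 0)" by simp

lemma sel_identity:
  fixes l :: nat
  defines "S \<equiv> mat (Suc l) l (\<lambda>(i,j). if i = Suc j then 1 else 0) :: complex mat"
  defines "E \<equiv> mat (Suc l) 1 (\<lambda>(i,j). if i = 0 then 1 else 0) :: complex mat"
  shows "S * cadj S + E * cadj E = 1\<^sub>m (Suc l)"
proof (rule eq_matI)
  fix i j assume i: "i < dim_row (1\<^sub>m (Suc l) :: complex mat)" and j: "j < dim_col (1\<^sub>m (Suc l) :: complex mat)"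
  have "(S * cadj S) $$ (i,j) = (\<Sum>t<l. S $$ (i,t) * cnj (S $$ (j,t)))"
    using i j by (simp add: scalar_prod_def atLeast0LessThan S_def)
  also have "\<dots> = (\<Sum>t<l. if i = Suc t \<and> j = Suc t then 1 else 0)"
    using i j by (intro sum.cong) (simp_all add: S_def)
  also have "\<dots> = (if i \<noteq> 0 \<and> i = j then 1 else 0)"
  proof (cases i)
    case 0 thus ?thesis by simp
  next
    case (Suc i')
    have "(\<Sum>t<l. if i = Suc t \<and> j = Suc t then 1 else 0) = (\<Sum>t<l. if t = i' then (if j = i then 1 else 0) else (0::complex))"
      using Suc by (intro sum.cong) auto
    also have "\<dots> = (if j = i then 1 else 0)" using Suc i by (simp add: sum.delta)
    finally show ?thesis using Suc by simp
  qed
  finally have 1: "(S * cadj S) $$ (i,j) = (if i \<noteq> 0 \<and> i = j then 1 else 0)" .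
  have 2: "(E * cadj E) $$ (i,j) = (if i = 0 \<and> j = 0 then 1 else 0)"
    using i j by (simp add: scalar_prod_def E_def)
  show "(S * cadj S + E * cadj E) $$ (i, j) = 1\<^sub>m (Suc l) $$ (i, j)"
    using i j 1 2 by (simp add: S_def E_def)
qed (simp_all add: S_def E_def)

lemma mat_minus_zero_eq: "(X::complex mat) \<in> carrier_mat a b \<Longrightarrow> Y \<in> carrier_mat a b \<Longrightarrow> X - Y = 0\<^sub>m a b \<Longrightarrow> X = Y"
proof (rule eq_matI)
  fix i j assume X: "X \<in> carrier_mat a b" and Y: "Y \<in> carrier_mat a b" and e: "X - Y = 0\<^sub>m a b"
    and i: "i < dim_row Y" and j: "j < dim_col Y"
  have "(X - Y) $$ (i,j) = 0" using e i j Y by simp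
  thus "X $$ (i,j) = Y $$ (i,j)" using X Y i j by simp
qed auto

lemma mat_decomp_minus: "(X::complex mat) \<in> carrier_mat a b \<Longrightarrow> Y \<in> carrier_mat a b \<Longrightarrow> X = (X - Y) + Y"
  by (rule eq_matI) auto

lemma proj_base: "(Y::complex mat) \<in> carrier_mat k 0 \<Longrightarrow> \<exists>P Z. P \<in> carrier_mat k k \<and> Z \<in> carrier_mat 0 k \<and> cadj P = P \<and> P * P = P \<and> P * Y = Y \<and> P = Y * Z"
proof (intro exI conjI)
  assume Y: "Y \<in> carrier_mat k 0"
  show "0\<^sub>m k k \<in> carrier_mat k k" "0\<^sub>m 0 k \<in> carrier_mat 0 k" "cadj (0\<^sub>m k k) = 0\<^sub>m k k" by simp_all
  show "0\<^sub>m k k * 0\<^sub>m k k = (0\<^sub>m k k :: complex mat)" by simp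
  show "0\<^sub>m k k * Y = Y" using Y by (intro eq_matI) auto
  show "0\<^sub>m k k = Y * 0\<^sub>m 0 k" using Y by (intro eq_matI) (auto simp: scalar_prod_def)
qed

lemma proj_step:
  fixes Y :: "complex mat"
  assumes Y: "Y \<in> carrier_mat k (Suc l)"
    and IH: "\<And>Y0. Y0 \<in> carrier_mat k l \<Longrightarrow> \<exists>P Z. P \<in> carrier_mat k k \<and> Z \<in> carrier_mat l k \<and> cadj P = P \<and> P * P = P \<and> P * Y0 = Y0 \<and> P = Y0 * Z"
  shows "\<exists>P Z. P \<in> carrier_mat k k \<and> Z \<in> carrier_mat (Suc l) k \<and> cadj P = P \<and> P * P = P \<and> P * Y = Y \<and> P = Y * Z"
proof -
  define S where "S = (mat (Suc l) l (\<lambda>(i,j). if i = Suc j then 1 else 0) :: complex mat)"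
  define E where "E = (mat (Suc l) 1 (\<lambda>(i,j). if i = 0 then 1 else 0) :: complex mat)"
  have S: "S \<in> carrier_mat (Suc l) l" and E: "E \<in> carrier_mat (Suc l) 1" unfolding S_def E_def by simp_all
  have SE: "S * cadj S + E * cadj E = 1\<^sub>m (Suc l)" unfolding S_def E_def by (rule sel_identity)
  define Y0 where "Y0 = Y * S"
  define A1 where "A1 = Y * E"
  have Y0: "Y0 \<in> carrier_mat k l" unfolding Y0_def using Y S by (rule mult_carrier_mat)
  have A1: "A1 \<in> carrier_mat k 1" unfolding A1_def using Y E by (rule mult_carrier_mat)
  have cS: "cadj S \<in> carrier_mat l (Suc l)" and cE: "cadj E \<in> carrier_mat 1 (Suc l)" using S E by simp_all
  have Ydec: "Y = Y0 * cadj S + A1 * cadj E"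
  proof -
    have "Y0 * cadj S + A1 * cadj E = Y * (S * cadj S) + Y * (E * cadj E)"
      unfolding Y0_def A1_def using assoc_mult_mat[OF Y S cS] assoc_mult_mat[OF Y E cE] by simp
    also have "\<dots> = Y * (S * cadj S + E * cadj E)"
    proof -
      have SS: "S * cadj S \<in> carrier_mat (Suc l) (Suc l)" using S cS by simp
      have EE: "E * cadj E \<in> carrier_mat (Suc l) (Suc l)" using E cE by simp
      show ?thesis by (rule mult_add_distrib_mat[OF Y SS EE, symmetric])
    qed
    also have "\<dots> = Y" unfolding SE using Y by simp
    finally show ?thesis by simp
  qed
  have fin: "P' * Y = Y" if P': "P' \<in> carrier_mat k k" and h1: "P' * Y0 = Y0" and h2: "P' * A1 = A1" for P'
  proof -
    have c1: "Y0 * cadj S \<in> carrier_mat k (Suc l)" using Y0 cS by simp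
    have c2: "A1 * cadj E \<in> carrier_mat k (Suc l)" using A1 cE by simp
    have "P' * Y = P' * (Y0 * cadj S) + P' * (A1 * cadj E)"
      using Ydec mult_add_distrib_mat[OF P' c1 c2] by simp
    also have "\<dots> = (P' * Y0) * cadj S + (P' * A1) * cadj E"
      using assoc_mult_mat[OF P' Y0 cS] assoc_mult_mat[OF P' A1 cE] by simp
    also have "\<dots> = Y" using h1 h2 Ydec by simp
    finally show ?thesis .
  qed
  from IH[OF Y0] obtain P Z where P: "P \<in> carrier_mat k k" and Z: "Z \<in> carrier_mat l k"
    and hP: "cadj P = P" and PP: "P * P = P" and PY0: "P * Y0 = Y0" and PZ: "P = Y0 * Z" by blast
  define C1 where "C1 = A1 - P * A1"
  have PA1: "P * A1 \<in> carrier_mat k 1" using P A1 by simp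
  have C1: "C1 \<in> carrier_mat k 1" unfolding C1_def using A1 PA1 by simp
  have PZ': "P = Y * (S * Z)" unfolding PZ Y0_def using assoc_mult_mat[OF Y S Z] .
  have SZ: "S * Z \<in> carrier_mat (Suc l) k" using S Z by simp
  show ?thesis
  proof (cases "C1 = 0\<^sub>m k 1")
    case True
    have "P * A1 = A1" using mat_minus_zero_eq[OF A1 PA1] True unfolding C1_def by simp
    hence "P * Y = Y" using fin[OF P PY0] by simp
    thus ?thesis using P SZ hP PP PZ' by blast
  next
    case False
    define d where "d = (cadj C1 * C1) $$ (0,0)"
    have cC1: "cadj C1 \<in> carrier_mat 1 k" using C1 by simp
    have D: "cadj C1 * C1 \<in> carrier_mat 1 1" by (rule mult_carrier_mat[OF cC1 C1])
    have d0: "d \<noteq> 0"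
    proof
      assume "d = 0"
      have "d = (\<Sum>i<k. cnj (C1 $$ (i,0)) * C1 $$ (i,0))"
        unfolding d_def using C1 by (simp add: scalar_prod_def atLeast0LessThan)
      also have "\<dots> = col C1 0 \<bullet>c col C1 0"
        using C1 by (simp add: scalar_prod_def atLeast0LessThan mult.commute)
      finally have "col C1 0 \<bullet>c col C1 0 = 0" using \<open>d = 0\<close> by simp
      hence "col C1 0 = 0\<^sub>v k" using C1 by (subst (asm) conjugate_square_eq_0_vec[of _ k]) auto
      hence "C1 = 0\<^sub>m k 1"
      proof (intro eq_matI)
        fix i j assume c: "col C1 0 = 0\<^sub>v k" and i: "i < dim_row (0\<^sub>m k 1 :: complex mat)" and j: "j < dim_col (0\<^sub>m k 1 :: complex mat)"
        have "col C1 0 $ i = 0" using c i by simp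
        thus "C1 $$ (i,j) = 0\<^sub>m k 1 $$ (i,j)" using i j C1 by simp
      qed (use C1 in simp_all)
      thus False using False by simp
    qed
    have dreal: "cnj d = d"
    proof -
      have "cadj (cadj C1 * C1) = cadj C1 * C1" using C1 by (simp add: cadj_mult)
      hence "cadj (cadj C1 * C1) $$ (0,0) = (cadj C1 * C1) $$ (0,0)" by simp
      moreover have "dim_row (cadj C1 * C1) = 1" "dim_col (cadj C1 * C1) = 1" using carrier_matD[OF D] by simp_all
      ultimately show ?thesis unfolding d_def by simp
    qed
    have D1: "cadj C1 * C1 = d \<cdot>\<^sub>m 1\<^sub>m 1"
      by (rule eq_matI) (use D in \<open>auto simp: d_def\<close>)
    have PC: "P * C1 = 0\<^sub>m k 1"
    proof -
      have "P * C1 = P * A1 - P * (P * A1)" unfolding C1_def by (rule mult_minus_distrib_mat[OF P A1 PA1])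
      also have "P * (P * A1) = P * A1" using assoc_mult_mat[OF P P A1] PP by simp
      finally show ?thesis using PA1 by simp
    qed
    have CP: "cadj C1 * P = 0\<^sub>m 1 k"
    proof -
      have "cadj (P * C1) = cadj C1 * P" using P C1 hP by (simp add: cadj_mult)
      thus ?thesis using PC by simp
    qed
    have CY0: "cadj C1 * Y0 = 0\<^sub>m 1 l"
    proof -
      have "cadj C1 * Y0 = cadj C1 * (P * Y0)" using PY0 by simp
      also have "\<dots> = (cadj C1 * P) * Y0" using assoc_mult_mat[OF cC1 P Y0] by simp
      finally show ?thesis using CP left_mult_zero_mat[OF Y0] by simp
    qed
    have CA1: "cadj C1 * A1 = cadj C1 * C1"
    proof -
      have "A1 = C1 + P * A1" unfolding C1_def by (rule mat_decomp_minus[OF A1 PA1])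
      hence "cadj C1 * A1 = cadj C1 * (C1 + P * A1)" by simp
      also have "\<dots> = cadj C1 * C1 + cadj C1 * (P * A1)" by (rule mult_add_distrib_mat[OF cC1 C1 PA1])
      also have "cadj C1 * (P * A1) = 0\<^sub>m 1 1" using assoc_mult_mat[OF cC1 P A1] CP left_mult_zero_mat[OF A1] by simp
      finally show ?thesis using D by simp
    qed
    define Q where "Q = C1 * cadj C1"
    have Q: "Q \<in> carrier_mat k k" unfolding Q_def by (rule mult_carrier_mat[OF C1 cC1])
    have hQ: "cadj Q = Q" unfolding Q_def using C1 by (simp add: cadj_mult)
    have QQ: "Q * Q = d \<cdot>\<^sub>m Q"
    proof -
      have "Q * Q = C1 * ((cadj C1 * C1) * cadj C1)"
        unfolding Q_def using assoc_mult_mat[OF C1 cC1 Q[unfolded Q_def]] assoc_mult_mat[OF cC1 C1 cC1] by simp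
      also have "\<dots> = C1 * (d \<cdot>\<^sub>m cadj C1)" unfolding D1 using cC1 mult_smult_assoc_mat[of "1\<^sub>m 1" 1 1 "cadj C1" k d] left_mult_one_mat[OF cC1] by simp
      also have "\<dots> = d \<cdot>\<^sub>m Q" unfolding Q_def by (rule mult_smult_distrib[OF C1 cC1])
      finally show ?thesis .
    qed
    have PQ: "P * Q = 0\<^sub>m k k" unfolding Q_def using assoc_mult_mat[OF P C1 cC1, symmetric] PC left_mult_zero_mat[OF cC1] by simp
    have QP: "Q * P = 0\<^sub>m k k" unfolding Q_def using assoc_mult_mat[OF C1 cC1 P] CP right_mult_zero_mat[OF C1] by simp
    have QY0: "Q * Y0 = 0\<^sub>m k l" unfolding Q_def using assoc_mult_mat[OF C1 cC1 Y0] CY0 right_mult_zero_mat[OF C1] by simp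
    have QA1: "Q * A1 = d \<cdot>\<^sub>m C1"
    proof -
      have "Q * A1 = C1 * (d \<cdot>\<^sub>m 1\<^sub>m 1)" unfolding Q_def using assoc_mult_mat[OF C1 cC1 A1] CA1 D1 by simp
      also have "\<dots> = d \<cdot>\<^sub>m C1" using mult_smult_distrib[OF C1 one_carrier_mat[of 1]] C1 by simp
      finally show ?thesis .
    qed
    define r where "r = 1 / d"
    have rd: "r * d = 1" unfolding r_def using d0 by simp
    have rreal: "cnj r = r" unfolding r_def using dreal by simp
    define P' where "P' = P + r \<cdot>\<^sub>m Q"
    have rQ: "r \<cdot>\<^sub>m Q \<in> carrier_mat k k" using Q by simp
    have P': "P' \<in> carrier_mat k k" unfolding P'_def using P rQ by simp
    have hP': "cadj P' = P'" unfolding P'_def using P Q hP hQ rreal by (simp add: cadj_add cadj_smult)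
    have P'P': "P' * P' = P'"
    proof -
      have e1: "P * (r \<cdot>\<^sub>m Q) = 0\<^sub>m k k" using mult_smult_distrib[OF P Q] PQ by simp
      have e2: "r \<cdot>\<^sub>m Q * P = 0\<^sub>m k k" using mult_smult_assoc_mat[OF Q P] QP by simp
      have e3: "r \<cdot>\<^sub>m Q * (r \<cdot>\<^sub>m Q) = r \<cdot>\<^sub>m Q"
      proof -
        have "r \<cdot>\<^sub>m Q * (r \<cdot>\<^sub>m Q) = r \<cdot>\<^sub>m (r \<cdot>\<^sub>m (Q * Q))"
          using mult_smult_assoc_mat[OF Q rQ] mult_smult_distrib[OF Q Q] by simp
        also have "\<dots> = (r * r * d) \<cdot>\<^sub>m Q" unfolding QQ by (simp add: smult_smult_mat mult.assoc)
        finally show ?thesis using rd by (simp add: mult.assoc)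
      qed
      have "P' * P' = P * P' + r \<cdot>\<^sub>m Q * P'" unfolding P'_def by (rule add_mult_distrib_mat[OF P rQ P'[unfolded P'_def]])
      also have "P * P' = P * P + P * (r \<cdot>\<^sub>m Q)" unfolding P'_def by (rule mult_add_distrib_mat[OF P P rQ])
      also have "r \<cdot>\<^sub>m Q * P' = r \<cdot>\<^sub>m Q * P + r \<cdot>\<^sub>m Q * (r \<cdot>\<^sub>m Q)" unfolding P'_def by (rule mult_add_distrib_mat[OF rQ P rQ])
      finally show ?thesis unfolding e1 e2 e3 PP P'_def using P rQ by simp
    qed
    have P'Y0: "P' * Y0 = Y0"
    proof -
      have "P' * Y0 = P * Y0 + r \<cdot>\<^sub>m Q * Y0" unfolding P'_def by (rule add_mult_distrib_mat[OF P rQ Y0])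
      also have "r \<cdot>\<^sub>m Q * Y0 = 0\<^sub>m k l" using mult_smult_assoc_mat[OF Q Y0] QY0 by simp
      finally show ?thesis using PY0 Y0 by simp
    qed
    have P'A1: "P' * A1 = A1"
    proof -
      have "P' * A1 = P * A1 + r \<cdot>\<^sub>m Q * A1" unfolding P'_def by (rule add_mult_distrib_mat[OF P rQ A1])
      also have "r \<cdot>\<^sub>m Q * A1 = C1" using mult_smult_assoc_mat[OF Q A1] QA1 rd by (simp add: smult_smult_mat)
      finally show ?thesis unfolding C1_def using mat_decomp_minus[OF A1 PA1] PA1 C1[unfolded C1_def] by (simp add: comm_add_mat[of _ k 1])
    qed
    define Z' where "Z' = S * Z + r \<cdot>\<^sub>m ((E - S * (Z * A1)) * cadj C1)"
    have ZA1: "Z * A1 \<in> carrier_mat l 1" using Z A1 by simp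
    have SZA1: "S * (Z * A1) \<in> carrier_mat (Suc l) 1" using S ZA1 by simp
    have EW: "(E - S * (Z * A1)) \<in> carrier_mat (Suc l) 1" using SZA1 by simp
    have EWC: "(E - S * (Z * A1)) * cadj C1 \<in> carrier_mat (Suc l) k" by (rule mult_carrier_mat[OF EW cC1])
    have Z': "Z' \<in> carrier_mat (Suc l) k" unfolding Z'_def using SZ EWC by simp
    have YZ': "P' = Y * Z'"
    proof -
      have "Y * Z' = Y * (S * Z) + Y * (r \<cdot>\<^sub>m ((E - S * (Z * A1)) * cadj C1))"
        unfolding Z'_def by (rule mult_add_distrib_mat[OF Y SZ smult_carrier_mat[OF EWC]])
      also have "Y * (S * Z) = P" using PZ' by simp
      also have "Y * (r \<cdot>\<^sub>m ((E - S * (Z * A1)) * cadj C1)) = r \<cdot>\<^sub>m (Y * (E - S * (Z * A1)) * cadj C1)"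
        using mult_smult_distrib[OF Y EWC] assoc_mult_mat[OF Y EW cC1] by simp
      also have "Y * (E - S * (Z * A1)) = C1"
      proof -
        have "Y * (E - S * (Z * A1)) = Y * E - Y * (S * (Z * A1))" by (rule mult_minus_distrib_mat[OF Y E SZA1])
        also have "Y * (S * (Z * A1)) = P * A1"
          unfolding PZ Y0_def using assoc_mult_mat[OF Y S ZA1] assoc_mult_mat[OF Y S Z] assoc_mult_mat[OF mult_carrier_mat[OF Y S] Z A1] by simp
        finally show ?thesis unfolding C1_def A1_def .
      qed
      finally show ?thesis unfolding P'_def Q_def by simp
    qed
    have "P' * Y = Y" by (rule fin[OF P' P'Y0 P'A1])
    thus ?thesis using P' Z' hP' P'P' YZ' by blast
  qed
qed

lemma proj_exists: "(Y::complex mat) \<in> carrier_mat k l \<Longrightarrow> \<exists>P Z. P \<in> carrier_mat k k \<and> Z \<in> carrier_mat l k \<and> cadj P = P \<and> P * P = P \<and> P * Y = Y \<and> P = Y * Z"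
proof (induction l arbitrary: Y)
  case 0 thus ?case by (rule proj_base)
next
  case (Suc l) show ?case by (rule proj_step[OF Suc.prems Suc.IH])
qed

lemma mp_exists:
  assumes X: "(X::complex mat) \<in> carrier_mat a b"
  shows "\<exists>G. G \<in> gen_inv {1,2,3,4} X"
proof -
  obtain Pc Zc where Pc: "Pc \<in> carrier_mat a a" and Zc: "Zc \<in> carrier_mat b a" and hPc: "cadj Pc = Pc"
    and PcPc: "Pc * Pc = Pc" and PcX: "Pc * X = X" and PcZ: "Pc = X * Zc" using proj_exists[OF X] by blast
  have cX: "cadj X \<in> carrier_mat b a" using X by simp
  obtain Pr Zr where Pr: "Pr \<in> carrier_mat b b" and Zr: "Zr \<in> carrier_mat a b" and hPr: "cadj Pr = Pr"
    and PrPr: "Pr * Pr = Pr" and PrX: "Pr * cadj X = cadj X" and PrZ: "Pr = cadj X * Zr" using proj_exists[OF cX] by blast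
  have XPr: "X * Pr = X"
  proof -
    have "cadj (Pr * cadj X) = X * Pr" using Pr X hPr by (simp add: cadj_mult)
    thus ?thesis using PrX by simp
  qed
  have PrZ': "Pr = cadj Zr * X"
  proof -
    have "cadj Pr = cadj Zr * X" unfolding PrZ using X Zr by (simp add: cadj_mult)
    thus ?thesis using hPr by simp
  qed
  define G where "G = Pr * Zc * Pc"
  have ZcPc: "Zc * Pc \<in> carrier_mat b a" using Zc Pc by simp
  have G: "G \<in> carrier_mat b a" unfolding G_def using Pr Zc Pc by simp
  have G': "G = Pr * (Zc * Pc)" unfolding G_def by (rule assoc_mult_mat[OF Pr Zc Pc])
  have XG: "X * G = Pc"
  proof -
    have "X * G = (X * Pr) * (Zc * Pc)" unfolding G' using assoc_mult_mat[OF X Pr ZcPc] by simp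
    also have "\<dots> = (X * Zc) * Pc" using XPr assoc_mult_mat[OF X Zc Pc] by simp
    finally show ?thesis using PcZ PcPc by simp
  qed
  have GX: "G * X = Pr"
  proof -
    have cZr: "cadj Zr \<in> carrier_mat b a" using Zr by simp
    have "G * X = Pr * (Zc * (Pc * X))" unfolding G' using assoc_mult_mat[OF Pr ZcPc X] assoc_mult_mat[OF Zc Pc X] by simp
    also have "\<dots> = cadj Zr * ((X * Zc) * X)" unfolding PcX PrZ' using assoc_mult_mat[OF cZr X mult_carrier_mat[OF Zc X]] assoc_mult_mat[OF X Zc X] by simp
    also have "\<dots> = Pr" unfolding PcZ[symmetric] PcX PrZ' ..
    finally show ?thesis .
  qed
  have "X * G * X = X" using XG PcX by simp
  moreover have "G * X * G = G"
  proof -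
    have "G * X * G = Pr * G" using GX by simp
    also have "\<dots> = G" unfolding G' using assoc_mult_mat[OF Pr Pr ZcPc] PrPr by simp
    finally show ?thesis .
  qed
  moreover have "cadj (X * G) = X * G" using XG hPc by simp
  moreover have "cadj (G * X) = G * X" using GX hPr by simp
  ultimately have "G \<in> gen_inv {1,2,3,4} X" unfolding gen_inv_def using G X by auto
  thus ?thesis by blast
qed

lemma mp_unique:
  assumes X: "(X::complex mat) \<in> carrier_mat a b" and G1: "G1 \<in> gen_inv {1,2,3,4} X" and G2: "G2 \<in> gen_inv {1,2,3,4} X"
  shows "G1 = G2"
proof -
  have c1: "G1 \<in> carrier_mat b a" and c2: "G2 \<in> carrier_mat b a" using G1 G2 X unfolding gen_inv_def by auto
  have a1: "X * G1 * X = X" "G1 * X * G1 = G1" "cadj (X * G1) = X * G1" "cadj (G1 * X) = G1 * X"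
    using G1 unfolding gen_inv_def by auto
  have a2: "X * G2 * X = X" "G2 * X * G2 = G2" "cadj (X * G2) = X * G2" "cadj (G2 * X) = G2 * X"
    using G2 unfolding gen_inv_def by auto
  have cX: "cadj X \<in> carrier_mat b a" using X by simp
  have cG1: "cadj G1 \<in> carrier_mat a b" using c1 by simp
  have XG2: "X * G2 \<in> carrier_mat a a" using X c2 by simp
  have G2X: "G2 * X \<in> carrier_mat b b" using X c2 by simp
  have e1: "cadj X = cadj X * (X * G2)"
  proof -
    have "cadj X = cadj ((X * G2) * X)" using a2 by simp
    also have "\<dots> = cadj X * cadj (X * G2)" by (rule cadj_mult) (use X c2 in simp)
    finally show ?thesis using a2 by simp
  qed
  have e2: "cadj X = (G2 * X) * cadj X"
  proof -
    have "cadj X = cadj (X * (G2 * X))" using a2 assoc_mult_mat[OF X c2 X] by simp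
    also have "\<dots> = cadj (G2 * X) * cadj X" by (rule cadj_mult) (use X c2 in simp)
    finally show ?thesis using a2 by simp
  qed
  have f1: "X * G1 = X * G2"
  proof -
    have "X * G1 = cadj G1 * cadj X" using a1 cadj_mult[of X G1] X c1 by simp
    also have "\<dots> = (cadj G1 * cadj X) * (X * G2)" using e1 assoc_mult_mat[OF cG1 cX XG2] by simp
    also have "cadj G1 * cadj X = X * G1" using a1 cadj_mult[of X G1] X c1 by simp
    also have "X * G1 * (X * G2) = X * G2" using assoc_mult_mat[OF mult_carrier_mat[OF X c1] X c2] a1 by simp
    finally show ?thesis .
  qed
  have f2: "G1 * X = G2 * X"
  proof -
    have "G1 * X = cadj X * cadj G1" using a1 cadj_mult[of G1 X] X c1 by simp
    also have "\<dots> = (G2 * X) * (cadj X * cadj G1)" using e2 assoc_mult_mat[OF G2X cX cG1] by simp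
    also have "cadj X * cadj G1 = G1 * X" using a1 cadj_mult[of G1 X] X c1 by simp
    also have "G2 * X * (G1 * X) = G2 * X" using assoc_mult_mat[OF c2 X mult_carrier_mat[OF c1 X]] assoc_mult_mat[OF X c1 X] a1 by simp
    finally show ?thesis .
  qed
  have "G1 = G1 * (X * G1)" using a1 assoc_mult_mat[OF c1 X c1] by simp
  also have "\<dots> = (G1 * X) * G2" using f1 assoc_mult_mat[OF c1 X c2] by simp
  also have "\<dots> = G2" using f2 a2 by simp
  finally show ?thesis .
qed

lemma mp_gen: "(X::complex mat) \<in> carrier_mat a b \<Longrightarrow> mp_inv X \<in> gen_inv {1,2,3,4} X"
  unfolding mp_inv_def using mp_exists[of X a b] mp_unique[of X a b] by (metis theI)

lemma mp_eqI: "(X::complex mat) \<in> carrier_mat a b \<Longrightarrow> G \<in> gen_inv {1,2,3,4} X \<Longrightarrow> mp_inv X = G"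
  using mp_gen mp_unique by blast

lemma mp_props:
  assumes "(X::complex mat) \<in> carrier_mat a b"
  shows "mp_inv X \<in> carrier_mat b a" "X * mp_inv X * X = X" "mp_inv X * X * mp_inv X = mp_inv X"
    "cadj (X * mp_inv X) = X * mp_inv X" "cadj (mp_inv X * X) = mp_inv X * X"
  using mp_gen[OF assms] assms unfolding gen_inv_def by auto

lemma mp_cadj:
  assumes X: "(X::complex mat) \<in> carrier_mat a b"
  shows "mp_inv (cadj X) = cadj (mp_inv X)"
proof (rule mp_eqI)
  note p = mp_props[OF X]
  let ?G = "mp_inv X"
  have cX: "cadj X \<in> carrier_mat b a" using X by simp
  show "cadj X \<in> carrier_mat b a" by fact
  have 1: "cadj X * cadj ?G * cadj X = cadj X"
  proof -
    have "cadj X * cadj ?G * cadj X = cadj (?G * X) * cadj X" using X p(1) by (simp add: cadj_mult)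
    also have "\<dots> = cadj (X * (?G * X))" using X p(1) by (simp add: cadj_mult)
    also have "X * (?G * X) = X" using assoc_mult_mat[OF X p(1) X] p(2) by simp
    finally show ?thesis .
  qed
  have 2: "cadj ?G * cadj X * cadj ?G = cadj ?G"
  proof -
    have "cadj ?G * cadj X * cadj ?G = cadj (X * ?G) * cadj ?G" using X p(1) by (simp add: cadj_mult)
    also have "\<dots> = cadj (?G * (X * ?G))" using X p(1) by (simp add: cadj_mult)
    also have "?G * (X * ?G) = ?G" using assoc_mult_mat[OF p(1) X p(1)] p(3) by simp
    finally show ?thesis .
  qed
  have 3: "cadj (cadj X * cadj ?G) = cadj X * cadj ?G"
    using X p(1) p(5) by (simp add: cadj_mult)
  have 4: "cadj (cadj ?G * cadj X) = cadj ?G * cadj X"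
    using X p(1) p(4) by (simp add: cadj_mult)
  show "cadj ?G \<in> gen_inv {1,2,3,4} (cadj X)" unfolding gen_inv_def using 1 2 3 4 p(1) carrier_matD[OF X] by simp
qed

lemma col_in_colspace: "(Y::complex mat) \<in> carrier_mat a c \<Longrightarrow> j < c \<Longrightarrow> col Y j \<in> colspace Y"
proof -
  assume Y: "Y \<in> carrier_mat a c" and j: "j < c"
  have "col Y j = Y *\<^sub>v unit_vec c j"
    by (rule eq_vecI) (use Y j in \<open>auto simp: scalar_prod_right_unit\<close>)
  thus ?thesis unfolding colspace_def using Y by auto
qed

lemma colspace_carrier: "(X::complex mat) \<in> carrier_mat a b \<Longrightarrow> colspace X \<subseteq> carrier_vec a"
  unfolding colspace_def by auto

lemma cs_mult_sub: "(X::complex mat) \<in> carrier_mat a b \<Longrightarrow> Z \<in> carrier_mat b c \<Longrightarrow> colspace (X * Z) \<subseteq> colspace X"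
proof
  fix v assume X: "X \<in> carrier_mat a b" and Z: "Z \<in> carrier_mat b c" and v: "v \<in> colspace (X * Z)"
  then obtain x where x: "x \<in> carrier_vec c" and vx: "v = (X * Z) *\<^sub>v x" unfolding colspace_def by auto
  have "v = X *\<^sub>v (Z *\<^sub>v x)" using vx assoc_mult_mat_vec[OF X Z x] by simp
  moreover have "Z *\<^sub>v x \<in> carrier_vec (dim_col X)" using Z X x carrier_matD[OF X] carrier_matD[OF Z] by simp
  ultimately show "v \<in> colspace X" unfolding colspace_def by blast
qed

lemma cs_sub_iff:
  assumes X: "(X::complex mat) \<in> carrier_mat a b" and Y: "Y \<in> carrier_mat a c"
  shows "colspace Y \<subseteq> colspace X \<longleftrightarrow> X * mp_inv X * Y = Y"
proof
  note p = mp_props[OF X]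
  have XG: "X * mp_inv X \<in> carrier_mat a a" using X p(1) by simp
  assume sub: "colspace Y \<subseteq> colspace X"
  show "X * mp_inv X * Y = Y"
  proof (rule mat_col_eqI)
    fix j assume "j < dim_col Y"
    hence j: "j < c" using Y by simp
    have "col Y j \<in> colspace X" using sub col_in_colspace[OF Y j] by blast
    then obtain w where w: "w \<in> carrier_vec b" and cw: "col Y j = X *\<^sub>v w" using X unfolding colspace_def by auto
    have "col (X * mp_inv X * Y) j = (X * mp_inv X) *\<^sub>v col Y j" using col_mult2[OF XG Y j] .
    also have "\<dots> = (X * mp_inv X * X) *\<^sub>v w" unfolding cw using assoc_mult_mat_vec[OF XG X w] by simp
    also have "\<dots> = col Y j" using p(2) cw by simp
    finally show "col (X * mp_inv X * Y) j = col Y j" .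
  qed (use XG Y carrier_matD[OF X] in simp_all)
next
  note p = mp_props[OF X]
  assume e: "X * mp_inv X * Y = Y"
  have GY: "mp_inv X * Y \<in> carrier_mat b c" using p(1) Y by simp
  have "colspace (X * (mp_inv X * Y)) \<subseteq> colspace X" by (rule cs_mult_sub[OF X GY])
  thus "colspace Y \<subseteq> colspace X" using e assoc_mult_mat[OF X p(1) Y] by simp
qed

lemma proj_facts:
  assumes X: "(X::complex mat) \<in> carrier_mat a b"
  shows "X * mp_inv X \<in> carrier_mat a a" "cadj (X * mp_inv X) = X * mp_inv X"
    "(X * mp_inv X) * (X * mp_inv X) = X * mp_inv X" "(X * mp_inv X) * X = X"
proof -
  note p = mp_props[OF X]
  show c: "X * mp_inv X \<in> carrier_mat a a" using X p(1) by simp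
  show "cadj (X * mp_inv X) = X * mp_inv X" by (rule p(4))
  show "(X * mp_inv X) * X = X" by (rule p(2))
  show "(X * mp_inv X) * (X * mp_inv X) = X * mp_inv X"
    using assoc_mult_mat[OF c X p(1), symmetric] p(2) by simp
qed

lemma cs_eq_proj:
  assumes X: "(X::complex mat) \<in> carrier_mat a b" and Y: "Y \<in> carrier_mat a c"
  shows "colspace X = colspace Y \<longleftrightarrow> X * mp_inv X = Y * mp_inv Y"
proof
  note px = proj_facts[OF X] and py = proj_facts[OF Y]
  note gx = mp_props(1)[OF X] and gy = mp_props(1)[OF Y]
  assume e: "colspace X = colspace Y"
  have PxY: "X * mp_inv X * Y = Y" using cs_sub_iff[OF X Y] e by simp
  have PyX: "Y * mp_inv Y * X = X" using cs_sub_iff[OF Y X] e by simp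
  have 1: "(X * mp_inv X) * (Y * mp_inv Y) = Y * mp_inv Y"
    using assoc_mult_mat[OF px(1) Y gy, symmetric] PxY by simp
  have 2: "(Y * mp_inv Y) * (X * mp_inv X) = X * mp_inv X"
    using assoc_mult_mat[OF py(1) X gx, symmetric] PyX by simp
  have "Y * mp_inv Y = cadj ((X * mp_inv X) * (Y * mp_inv Y))" using 1 py(2) by simp
  also have "\<dots> = cadj (Y * mp_inv Y) * cadj (X * mp_inv X)"
    by (rule cadj_mult) (use carrier_matD[OF px(1)] carrier_matD[OF py(1)] in simp)
  also have "\<dots> = (Y * mp_inv Y) * (X * mp_inv X)" using px(2) py(2) by simp
  finally show "X * mp_inv X = Y * mp_inv Y" using 2 by simp
next
  note px = proj_facts[OF X] and py = proj_facts[OF Y]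
  assume e: "X * mp_inv X = Y * mp_inv Y"
  have "X * mp_inv X * Y = Y" using e py(4) by simp
  moreover have "Y * mp_inv Y * X = X" using e px(4) by simp
  ultimately show "colspace X = colspace Y" using cs_sub_iff[OF X Y] cs_sub_iff[OF Y X] by blast
qed

lemma cs_left_image:
  assumes K: "(K::complex mat) \<in> carrier_mat a a" and X: "X \<in> carrier_mat a b"
  shows "colspace (K * X) = (\<lambda>v. K *\<^sub>v v) ` colspace X"
proof
  show "colspace (K * X) \<subseteq> (\<lambda>v. K *\<^sub>v v) ` colspace X"
  proof
    fix v assume "v \<in> colspace (K * X)"
    then obtain x where x: "x \<in> carrier_vec b" and v: "v = (K * X) *\<^sub>v x" using X unfolding colspace_def by auto
    have "v = K *\<^sub>v (X *\<^sub>v x)" using v assoc_mult_mat_vec[OF K X x] by simp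
    moreover have "X *\<^sub>v x \<in> colspace X" using x X unfolding colspace_def by auto
    ultimately show "v \<in> (\<lambda>v. K *\<^sub>v v) ` colspace X" by blast
  qed
  show "(\<lambda>v. K *\<^sub>v v) ` colspace X \<subseteq> colspace (K * X)"
  proof
    fix v assume "v \<in> (\<lambda>v. K *\<^sub>v v) ` colspace X"
    then obtain x where x: "x \<in> carrier_vec b" and v: "v = K *\<^sub>v (X *\<^sub>v x)" using X unfolding colspace_def by auto
    have "v = (K * X) *\<^sub>v x" using v assoc_mult_mat_vec[OF K X x] by simp
    thus "v \<in> colspace (K * X)" using x X unfolding colspace_def by auto
  qed
qed

lemma cs_left_cong:
  assumes K: "(K::complex mat) \<in> carrier_mat a a" and X: "X \<in> carrier_mat a b" and Y: "Y \<in> carrier_mat a c"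
    and e: "colspace X = colspace Y"
  shows "colspace (K * X) = colspace (K * Y)"
  using cs_left_image[OF K X] cs_left_image[OF K Y] e by simp

lemma cs_left_iff:
  assumes K: "(K::complex mat) \<in> carrier_mat a a" and Ki: "Ki \<in> carrier_mat a a" and KiK: "Ki * K = 1\<^sub>m a"
    and X: "X \<in> carrier_mat a b" and Y: "Y \<in> carrier_mat a c"
  shows "colspace (K * X) = colspace (K * Y) \<longleftrightarrow> colspace X = colspace Y"
proof
  assume "colspace (K * X) = colspace (K * Y)"
  hence "colspace (Ki * (K * X)) = colspace (Ki * (K * Y))"
    using cs_left_cong[OF Ki mult_carrier_mat[OF K X] mult_carrier_mat[OF K Y]] by simp
  moreover have "Ki * (K * X) = X" using assoc_mult_mat[OF Ki K X, symmetric] KiK X by simp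
  moreover have "Ki * (K * Y) = Y" using assoc_mult_mat[OF Ki K Y, symmetric] KiK Y by simp
  ultimately show "colspace X = colspace Y" by simp
qed (rule cs_left_cong[OF K X Y])

lemma cs_right_inv:
  assumes X: "(X::complex mat) \<in> carrier_mat a b" and Z: "Z \<in> carrier_mat b b" and Zi: "Zi \<in> carrier_mat b b"
    and ZZi: "Z * Zi = 1\<^sub>m b"
  shows "colspace (X * Z) = colspace X"
proof
  show "colspace (X * Z) \<subseteq> colspace X" by (rule cs_mult_sub[OF X Z])
  have "X = (X * Z) * Zi" using assoc_mult_mat[OF X Z Zi] ZZi X by simp
  thus "colspace X \<subseteq> colspace (X * Z)" using cs_mult_sub[OF mult_carrier_mat[OF X Z] Zi] by simp
qed

lemma cs_XXh:
  assumes X: "(X::complex mat) \<in> carrier_mat a b"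
  shows "colspace (X * cadj X) = colspace X"
proof
  have cX: "cadj X \<in> carrier_mat b a" using X by simp
  note p = mp_props[OF X]
  show "colspace (X * cadj X) \<subseteq> colspace X" by (rule cs_mult_sub[OF X cX])
  have "X = X * (mp_inv X * X)" using assoc_mult_mat[OF X p(1) X] p(2) by simp
  also have "mp_inv X * X = cadj X * cadj (mp_inv X)" using p(5) cadj_mult[of "mp_inv X" X] p(1) X by simp
  also have "X * (cadj X * cadj (mp_inv X)) = (X * cadj X) * cadj (mp_inv X)"
    using assoc_mult_mat[OF X cX cadj_carrier[OF p(1)]] by simp
  finally have e: "X = (X * cadj X) * cadj (mp_inv X)" .
  show "colspace X \<subseteq> colspace (X * cadj X)"
    using cs_mult_sub[OF mult_carrier_mat[OF X cX] cadj_carrier[OF p(1)]] e by simp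
qed

lemma comm_iff_cs:
  assumes H: "(H::complex mat) \<in> carrier_mat a a" and Hi: "Hi \<in> carrier_mat a a"
    and hH: "cadj H = H" and HHi: "H * Hi = 1\<^sub>m a" and HiH: "Hi * H = 1\<^sub>m a"
    and N: "N \<in> carrier_mat a b"
  shows "H * (N * mp_inv N) = (N * mp_inv N) * H \<longleftrightarrow> colspace (H * N) = colspace N"
proof -
  note pf = proj_facts[OF N]
  note g = mp_props(1)[OF N]
  define P where "P = N * mp_inv N"
  have P: "P \<in> carrier_mat a a" and hP: "cadj P = P" and PN: "P * N = N" using pf unfolding P_def by auto
  have HN: "H * N \<in> carrier_mat a b" using H N by simp
  show ?thesis unfolding P_def[symmetric]
  proof
    assume c: "H * P = P * H"
    have e1: "H * N = N * (mp_inv N * (H * N))"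
    proof -
      have "H * N = H * (P * N)" using PN by simp
      also have "\<dots> = (P * H) * N" using assoc_mult_mat[OF H P N] c by simp
      also have "\<dots> = N * (mp_inv N * (H * N))"
        unfolding P_def using assoc_mult_mat[OF N g H] assoc_mult_mat[OF mult_carrier_mat[OF N g] H N]
          assoc_mult_mat[OF N g HN] by simp
      finally show ?thesis .
    qed
    have cHi: "Hi * P = P * Hi"
    proof -
      have "Hi * P = Hi * P * (H * Hi)" using HHi right_mult_one_mat[OF mult_carrier_mat[OF Hi P]] by simp
      also have "\<dots> = Hi * (P * H) * Hi"
        using assoc_mult_mat[OF mult_carrier_mat[OF Hi P] H Hi] assoc_mult_mat[OF Hi P H] by simp
      also have "\<dots> = (Hi * H) * (P * Hi)" using c assoc_mult_mat[OF Hi H P] assoc_mult_mat[OF Hi mult_carrier_mat[OF H P] Hi]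
        assoc_mult_mat[OF mult_carrier_mat[OF Hi H] P Hi] by simp
      finally show ?thesis using HiH left_mult_one_mat[OF mult_carrier_mat[OF P Hi]] by simp
    qed
    have e2: "N = (H * N) * (mp_inv N * (Hi * N))"
    proof -
      have "N = H * (Hi * N)" using assoc_mult_mat[OF H Hi N] HHi left_mult_one_mat[OF N] by simp
      also have "Hi * N = Hi * (P * N)" using PN by simp
      also have "\<dots> = P * (Hi * N)" using assoc_mult_mat[OF Hi P N] assoc_mult_mat[OF P Hi N] cHi by simp
      also have "H * (P * (Hi * N)) = (H * N) * (mp_inv N * (Hi * N))"
        unfolding P_def using assoc_mult_mat[OF N g mult_carrier_mat[OF Hi N]] assoc_mult_mat[OF H N mult_carrier_mat[OF g mult_carrier_mat[OF Hi N]]] by simp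
      finally show ?thesis .
    qed
    have "colspace (H * N) \<subseteq> colspace N" using cs_mult_sub[OF N mult_carrier_mat[OF g HN]] e1 by simp
    moreover have "colspace N \<subseteq> colspace (H * N)"
      using cs_mult_sub[OF HN mult_carrier_mat[OF g mult_carrier_mat[OF Hi N]]] e2 by simp
    ultimately show "colspace (H * N) = colspace N" by blast
  next
    assume e: "colspace (H * N) = colspace N"
    have "N * mp_inv N * (H * N) = H * N" using cs_sub_iff[OF N HN] e by simp
    hence PHN: "P * (H * N) = H * N" unfolding P_def .
    have PHP: "P * H * P = H * P"
    proof -
      have "P * H * P = (P * (H * N)) * mp_inv N" unfolding P_def
        using assoc_mult_mat[OF mult_carrier_mat[OF N g] H mult_carrier_mat[OF N g]]
          assoc_mult_mat[OF H N g] assoc_mult_mat[OF mult_carrier_mat[OF N g] HN g] by simp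
      also have "\<dots> = (H * N) * mp_inv N" using PHN by simp
      also have "\<dots> = H * P" unfolding P_def using assoc_mult_mat[OF H N g] by simp
      finally show ?thesis .
    qed
    have "cadj (P * H * P) = P * H * P"
    proof -
      have "cadj ((P * H) * P) = cadj P * cadj (P * H)" by (rule cadj_mult) (use carrier_matD[OF P] carrier_matD[OF H] in simp)
      also have "cadj (P * H) = cadj H * cadj P" by (rule cadj_mult) (use carrier_matD[OF P] carrier_matD[OF H] in simp)
      finally show ?thesis using hP hH assoc_mult_mat[OF P H P] by simp
    qed
    moreover have "cadj (H * P) = P * H"
    proof -
      have "cadj (H * P) = cadj P * cadj H" by (rule cadj_mult) (use carrier_matD[OF P] carrier_matD[OF H] in simp)
      thus ?thesis using hP hH by simp
    qed
    ultimately show "H * P = P * H" using PHP by simp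
  qed
qed

lemma mat_inv_props:
  assumes X: "(X::complex mat) \<in> carrier_mat k k" and inv: "invertible_mat X"
  shows "mat_inv X \<in> carrier_mat k k" "X * mat_inv X = 1\<^sub>m k" "mat_inv X * X = 1\<^sub>m k"
proof -
  from inv obtain Y where "inverts_mat X Y" "inverts_mat Y X" unfolding invertible_mat_def by blast
  hence XY: "X * Y = 1\<^sub>m k" and YX: "Y * X = 1\<^sub>m (dim_row Y)" using X unfolding inverts_mat_def by auto
  have "dim_col Y = k" using XY by (metis index_mult_mat(3) index_one_mat(3))
  moreover have "dim_row Y = k" using YX X by (metis carrier_matD(2) index_mult_mat(3) index_one_mat(3))
  ultimately have Y: "Y \<in> carrier_mat k k" by (intro carrier_matI)
  have "\<exists>Y. Y \<in> carrier_mat (dim_row X) (dim_row X) \<and> X * Y = 1\<^sub>m (dim_row X) \<and> Y * X = 1\<^sub>m (dim_row X)"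
    using Y XY YX X by auto
  hence "mat_inv X \<in> carrier_mat (dim_row X) (dim_row X) \<and> X * mat_inv X = 1\<^sub>m (dim_row X) \<and> mat_inv X * X = 1\<^sub>m (dim_row X)"
    unfolding mat_inv_def by (rule someI_ex)
  thus "mat_inv X \<in> carrier_mat k k" "X * mat_inv X = 1\<^sub>m k" "mat_inv X * X = 1\<^sub>m k" using X by auto
qed

lemma sandwich:
  assumes L: "(L::complex mat) \<in> carrier_mat a b" and X: "X \<in> carrier_mat b c" and R: "R \<in> carrier_mat c d"
    and Li: "Li \<in> carrier_mat d c" and Y: "Y \<in> carrier_mat c e" and R': "R' \<in> carrier_mat e f"
    and RLi: "R * Li = 1\<^sub>m c"
  shows "(L * X * R) * (Li * Y * R') = L * (X * Y) * R'"
proof -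
  have LX: "L * X \<in> carrier_mat a c" using L X by simp
  have LiY: "Li * Y \<in> carrier_mat d e" using Li Y by simp
  have "(L * X * R) * (Li * Y * R') = (L * X) * (R * (Li * Y * R'))" by (rule assoc_mult_mat[OF LX R mult_carrier_mat[OF LiY R']])
  also have "R * (Li * Y * R') = (R * Li) * Y * R'"
    using assoc_mult_mat[OF R LiY R', symmetric] assoc_mult_mat[OF R Li Y, symmetric] by simp
  also have "\<dots> = Y * R'" using RLi left_mult_one_mat[OF Y] by simp
  also have "(L * X) * (Y * R') = L * (X * Y) * R'"
    using assoc_mult_mat[OF LX Y R', symmetric] assoc_mult_mat[OF L X Y] by simp
  finally show ?thesis .
qed

lemma mp_right_proj:
  assumes X: "(X::complex mat) \<in> carrier_mat a b"
  shows "mp_inv X * X = cadj X * mp_inv (cadj X)"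
proof -
  note p = mp_props[OF X]
  have "mp_inv X * X = cadj (mp_inv X * X)" using p(5) by simp
  also have "\<dots> = cadj X * cadj (mp_inv X)" by (rule cadj_mult) (use p(1) X in simp)
  finally show ?thesis using mp_cadj[OF X] by simp
qed

lemma EP1:
  assumes K: "(K::complex mat) \<in> carrier_mat a a" and Ki: "Ki \<in> carrier_mat a a" and hK: "cadj K = K"
    and KKi: "K * Ki = 1\<^sub>m a" and X: "X \<in> carrier_mat a b"
  shows "EP (K * X * cadj X) \<longleftrightarrow> colspace (K * X) = colspace X"
proof -
  have cX: "cadj X \<in> carrier_mat b a" using X by simp
  have XXh: "X * cadj X \<in> carrier_mat a a" by (rule mult_carrier_mat[OF X cX])
  have "cadj (K * X * cadj X) = X * cadj (K * X)" using cadj_mult[of "K * X" "cadj X"] K X by simp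
  also have "cadj (K * X) = cadj X * K" using cadj_mult[of K X] hK K X by simp
  also have "X * (cadj X * K) = (X * cadj X) * K" using assoc_mult_mat[OF X cX K] by simp
  finally have 1: "colspace (cadj (K * X * cadj X)) = colspace X"
    using cs_right_inv[OF XXh K Ki KKi] cs_XXh[OF X] by simp
  have "colspace (K * X * cadj X) = colspace (K * (X * cadj X))" using assoc_mult_mat[OF K X cX] by simp
  also have "\<dots> = colspace (K * X)" by (rule cs_left_cong[OF K XXh X cs_XXh[OF X]])
  finally show ?thesis unfolding EP_def using 1 by auto
qed

lemma EP2:
  assumes L: "(L::complex mat) \<in> carrier_mat b b" and Li: "Li \<in> carrier_mat b b" and hL: "cadj L = L"
    and LLi: "L * Li = 1\<^sub>m b" and X: "X \<in> carrier_mat a b"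
  shows "EP ((cadj X * X) * L) \<longleftrightarrow> colspace (L * cadj X) = colspace (cadj X)"
proof -
  have cX: "cadj X \<in> carrier_mat b a" using X by simp
  have XhX: "cadj X * X \<in> carrier_mat b b" by (rule mult_carrier_mat[OF cX X])
  have e: "colspace (cadj X * X) = colspace (cadj X)" using cs_XXh[OF cX] by simp
  have 1: "colspace ((cadj X * X) * L) = colspace (cadj X)" using cs_right_inv[OF XhX L Li LLi] e by simp
  have "cadj ((cadj X * X) * L) = cadj L * cadj (cadj X * X)" by (rule cadj_mult) (use L X in simp)
  also have "cadj (cadj X * X) = cadj X * X" using cadj_mult[of "cadj X" X] X by simp
  finally have "cadj ((cadj X * X) * L) = L * (cadj X * X)" using hL by simp
  hence 2: "colspace (cadj ((cadj X * X) * L)) = colspace (L * cadj X)" using cs_left_cong[OF L XhX cX e] by simp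
  show ?thesis unfolding EP_def using 1 2 by auto
qed

lemma herm_inv:
  assumes A: "(A::complex mat) \<in> carrier_mat k k" and Ai: "Ai \<in> carrier_mat k k" and AAi: "A * Ai = 1\<^sub>m k" and AiA: "Ai * A = 1\<^sub>m k"
  shows "A * cadj A \<in> carrier_mat k k" "cadj (A * cadj A) = A * cadj A"
    "(A * cadj A) * (cadj Ai * Ai) = 1\<^sub>m k" "(cadj Ai * Ai) * (A * cadj A) = 1\<^sub>m k" "cadj Ai * Ai \<in> carrier_mat k k"
    "cadj Ai * cadj A = 1\<^sub>m k" "cadj A * cadj Ai = 1\<^sub>m k"
proof -
  have cA: "cadj A \<in> carrier_mat k k" and cAi: "cadj Ai \<in> carrier_mat k k" using A Ai by simp_all
  show "A * cadj A \<in> carrier_mat k k" "cadj Ai * Ai \<in> carrier_mat k k"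
    by (rule mult_carrier_mat[OF A cA], rule mult_carrier_mat[OF cAi Ai])
  show "cadj (A * cadj A) = A * cadj A" using cadj_mult[of A "cadj A"] A by simp
  show 1: "cadj Ai * cadj A = 1\<^sub>m k" using cadj_mult[of A Ai] A Ai AAi by simp
  show 2: "cadj A * cadj Ai = 1\<^sub>m k" using cadj_mult[of Ai A] A Ai AiA by simp
  have "(A * cadj A) * (cadj Ai * Ai) = A * ((cadj A * cadj Ai) * Ai)"
    using assoc_mult_mat[OF A cA mult_carrier_mat[OF cAi Ai]] assoc_mult_mat[OF cA cAi Ai] by simp
  thus "(A * cadj A) * (cadj Ai * Ai) = 1\<^sub>m k" using 2 AAi left_mult_one_mat[OF Ai] by simp
  have "(cadj Ai * Ai) * (A * cadj A) = cadj Ai * ((Ai * A) * cadj A)"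
    using assoc_mult_mat[OF cAi Ai mult_carrier_mat[OF A cA]] assoc_mult_mat[OF Ai A cA] by simp
  thus "(cadj Ai * Ai) * (A * cadj A) = 1\<^sub>m k" using 1 AiA left_mult_one_mat[OF cA] by simp
qed

lemma cancel_both:
  assumes L: "(L::complex mat) \<in> carrier_mat a a" and Li: "Li \<in> carrier_mat a a" and LiL: "Li * L = 1\<^sub>m a"
    and X: "X \<in> carrier_mat a b" and R: "R \<in> carrier_mat b b" and Ri: "Ri \<in> carrier_mat b b" and RRi: "R * Ri = 1\<^sub>m b"
  shows "Li * (L * X * R) * Ri = X"
proof -
  have "Li * (L * X * R) * Ri = ((Li * L) * X) * (R * Ri)"
    using assoc_mult_mat[OF Li mult_carrier_mat[OF L X] R, symmetric] assoc_mult_mat[OF Li L X, symmetric]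
      assoc_mult_mat[OF mult_carrier_mat[OF mult_carrier_mat[OF Li L] X] R Ri] by simp
  thus ?thesis using LiL RRi left_mult_one_mat[OF X] right_mult_one_mat[OF X] by simp
qed

lemma inj_conj:
  assumes L: "(L::complex mat) \<in> carrier_mat a a" and Li: "Li \<in> carrier_mat a a" and LLi: "L * Li = 1\<^sub>m a"
    and R: "R \<in> carrier_mat b b" and Ri: "Ri \<in> carrier_mat b b" and RiR: "Ri * R = 1\<^sub>m b"
    and Y1: "Y1 \<in> carrier_mat a b" and Y2: "Y2 \<in> carrier_mat a b"
  shows "Li * Y1 * Ri = Li * Y2 * Ri \<longleftrightarrow> Y1 = Y2"
  using cancel_both[OF Li L LLi Y1 Ri R RiR] cancel_both[OF Li L LLi Y2 Ri R RiR] by metis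


theorem theorem4p2:
  fixes A B C :: "complex mat" and m n :: nat
  assumes "m \<ge> 1" "n \<ge> 1"
    and "A \<in> carrier_mat m m" "B \<in> carrier_mat m n" "C \<in> carrier_mat n n"
    and "invertible_mat A" "invertible_mat C"
  defines "M \<equiv> A * B * C"
  defines "R1 \<equiv> colspace (cadj A * A * B) = colspace B"
  defines "R2 \<equiv> colspace (C * cadj C * cadj B) = colspace (cadj B)"
  shows
    "(mp_inv M \<in> trans_gen_inv C {1} B A) \<and>
     (mp_inv M \<in> trans_gen_inv C {1,2} B A) \<and>
     (mp_inv M \<in> trans_gen_inv C {1,3} B A \<longleftrightarrow> R1) \<and>
     (mp_inv M \<in> trans_gen_inv C {1,4} B A \<longleftrightarrow> R2) \<and>
     (mp_inv M \<in> trans_gen_inv C {1,2,3} B A \<longleftrightarrow> R1) \<and>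
     (mp_inv M \<in> trans_gen_inv C {1,2,4} B A \<longleftrightarrow> R2) \<and>
     (mp_inv M \<in> trans_gen_inv C {1,3,4} B A \<longleftrightarrow> R1 \<and> R2) \<and>
     ((mp_inv M = mat_inv C * mp_inv B * mat_inv A) \<longleftrightarrow> R1 \<and> R2) \<and>
     ((colspace (A * cadj A * M) = colspace M \<and> colspace (cadj C * C * cadj M) = colspace (cadj M))
      \<longleftrightarrow> R1 \<and> R2) \<and>
     (((cadj A * A * B) * mp_inv (cadj A * A * B) = B * mp_inv B \<and>
      mp_inv (B * C * cadj C) * (B * C * cadj C) = mp_inv B * B) \<longleftrightarrow> R1 \<and> R2) \<and>
     ((EP (cadj A * A * B * cadj B) \<and> EP (cadj B * B * C * cadj C)) \<longleftrightarrow> R1 \<and> R2) \<and>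
     ((EP (A * cadj A * M * cadj M) \<and> EP (cadj M * M * cadj C * C)) \<longleftrightarrow> R1 \<and> R2)"
proof -
  have A: "A \<in> carrier_mat m m" and B: "B \<in> carrier_mat m n" and C: "C \<in> carrier_mat n n" using assms by auto
  define Ai where "Ai = mat_inv A"
  define Ci where "Ci = mat_inv C"
  have Ai: "Ai \<in> carrier_mat m m" and AAi: "A * Ai = 1\<^sub>m m" and AiA: "Ai * A = 1\<^sub>m m"
    using mat_inv_props[OF A assms(6)] unfolding Ai_def by auto
  have Ci: "Ci \<in> carrier_mat n n" and CCi: "C * Ci = 1\<^sub>m n" and CiC: "Ci * C = 1\<^sub>m n"
    using mat_inv_props[OF C assms(7)] unfolding Ci_def by auto
  note hA = herm_inv[OF A Ai AAi AiA]
  note hC = herm_inv[OF C Ci CCi CiC]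
  have cA: "cadj A \<in> carrier_mat m m" and cAi: "cadj Ai \<in> carrier_mat m m" using A Ai by simp_all
  have cC: "cadj C \<in> carrier_mat n n" and cCi: "cadj Ci \<in> carrier_mat n n" using C Ci by simp_all
  have cB: "cadj B \<in> carrier_mat n m" using B by simp
  note hAh = herm_inv[OF cA cAi hA(7) hA(6), unfolded cadj_cadj]
  note hCh = herm_inv[OF cC cCi hC(7) hC(6), unfolded cadj_cadj]
  have M: "M \<in> carrier_mat m n" unfolding M_def using A B C by simp
  have cM: "cadj M \<in> carrier_mat n m" using M by simp
  define Mp where "Mp = mp_inv M"
  note pM = mp_props[OF M, folded Mp_def]
  define G0 where "G0 = C * Mp * A"
  have G0: "G0 \<in> carrier_mat n m" unfolding G0_def using C pM(1) A by simp
  have hB: "Ai * M * Ci = B" unfolding M_def by (rule cancel_both[OF A Ai AiA B C Ci CCi])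
  have hMp: "Ci * G0 * Ai = Mp" unfolding G0_def by (rule cancel_both[OF C Ci CiC pM(1) A Ai AAi])
  have key: "Mp \<in> trans_gen_inv C I B A \<longleftrightarrow> G0 \<in> gen_inv I B" for I
  proof
    assume "Mp \<in> trans_gen_inv C I B A"
    then obtain G where G: "G \<in> gen_inv I B" and e: "Mp = Ci * G * Ai"
      unfolding trans_gen_inv_def Ci_def Ai_def by blast
    have Gc: "G \<in> carrier_mat n m" using G B unfolding gen_inv_def by auto
    have "G0 = G" unfolding G0_def e by (rule cancel_both[OF Ci C CCi Gc Ai A AiA])
    thus "G0 \<in> gen_inv I B" using G by simp
  next
    assume "G0 \<in> gen_inv I B"
    thus "Mp \<in> trans_gen_inv C I B A" unfolding trans_gen_inv_def Ci_def[symmetric] Ai_def[symmetric]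
      using hMp by blast
  qed
  define P where "P = M * Mp"
  define Q where "Q = Mp * M"
  have P: "P \<in> carrier_mat m m" unfolding P_def using M pM(1) by simp
  have Q: "Q \<in> carrier_mat n n" unfolding Q_def using M pM(1) by simp
  have hP: "cadj P = P" unfolding P_def by (rule pM(4))
  have hQ: "cadj Q = Q" unfolding Q_def by (rule pM(5))
  have BG0: "B * G0 = Ai * P * A"
    unfolding hB[symmetric] G0_def P_def by (rule sandwich[OF Ai M Ci C pM(1) A CiC])
  have G0B: "G0 * B = C * Q * Ci"
    unfolding hB[symmetric] G0_def Q_def by (rule sandwich[OF C pM(1) A Ai M Ci AAi])
  have E1: "B * G0 * B = B"
  proof -
    have "B * G0 * B = (Ai * P * A) * (Ai * M * Ci)" using BG0 hB by simp
    also have "\<dots> = Ai * (P * M) * Ci" by (rule sandwich[OF Ai P A Ai M Ci AAi])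
    also have "P * M = M" unfolding P_def by (rule pM(2))
    finally show ?thesis using hB by simp
  qed
  have E2: "G0 * B * G0 = G0"
  proof -
    have "G0 * B * G0 = (C * Q * Ci) * (C * Mp * A)" using G0B G0_def by simp
    also have "\<dots> = C * (Q * Mp) * A" by (rule sandwich[OF C Q Ci C pM(1) A CiC])
    also have "Q * Mp = Mp" unfolding Q_def by (rule pM(3))
    finally show ?thesis unfolding G0_def .
  qed
  define H where "H = A * cadj A"
  define K where "K = cadj C * C"
  have H: "H \<in> carrier_mat m m" using hA(1) unfolding H_def .
  have K: "K \<in> carrier_mat n n" using hCh(1) unfolding K_def .
  have T3: "cadj (B * G0) = B * G0 \<longleftrightarrow> H * P = P * H"
  proof -
    have 1: "cadj (B * G0) = Ai * (H * P) * cadj Ai"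
    proof -
      have "cadj (B * G0) = cadj (Ai * P * A)" using BG0 by simp
      also have "\<dots> = cadj A * cadj (Ai * P)" by (rule cadj_mult) (use Ai P A in simp)
      also have "cadj (Ai * P) = P * cadj Ai" using cadj_mult[of Ai P] Ai P hP by simp
      also have "cadj A * (P * cadj Ai) = Ai * (H * P) * cadj Ai"
        unfolding H_def using assoc_mult_mat[OF Ai A cA] AiA left_mult_one_mat[OF cA]
          assoc_mult_mat[OF Ai mult_carrier_mat[OF A cA] P] assoc_mult_mat[OF cA P cAi] by simp
      finally show ?thesis .
    qed
    have 2: "B * G0 = Ai * (P * H) * cadj Ai"
    proof -
      have "Ai * (P * H) * cadj Ai = Ai * P * (A * (cadj A * cadj Ai))"
        unfolding H_def using assoc_mult_mat[OF Ai P mult_carrier_mat[OF A cA]] assoc_mult_mat[OF P A cA]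
          assoc_mult_mat[OF mult_carrier_mat[OF Ai P] A cA, symmetric]
          assoc_mult_mat[OF mult_carrier_mat[OF Ai P] mult_carrier_mat[OF A cA] cAi]
          assoc_mult_mat[OF A cA cAi] by simp
      also have "\<dots> = Ai * P * A" using hA(7) right_mult_one_mat[OF A] by simp
      finally show ?thesis using BG0 by simp
    qed
    have "cadj (B * G0) = B * G0 \<longleftrightarrow> Ai * (H * P) * cadj Ai = Ai * (P * H) * cadj Ai" using 1 2 by simp
    thus ?thesis using inj_conj[OF A Ai AAi cA cAi hA(6) mult_carrier_mat[OF H P] mult_carrier_mat[OF P H]] by simp
  qed
  note dims = carrier_matD[OF A] carrier_matD[OF B] carrier_matD[OF C] carrier_matD[OF Ai] carrier_matD[OF Ci]
  have T4: "cadj (G0 * B) = G0 * B \<longleftrightarrow> K * Q = Q * K"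
  proof -
    have 1: "cadj (G0 * B) = cadj Ci * (Q * K) * Ci"
    proof -
      have "cadj (G0 * B) = cadj (C * Q * Ci)" using G0B by simp
      also have "\<dots> = cadj Ci * cadj (C * Q)" by (rule cadj_mult) (use C Q Ci in simp)
      also have "cadj (C * Q) = Q * cadj C" using cadj_mult[of C Q] C Q hQ by simp
      also have "cadj Ci * (Q * cadj C) = cadj Ci * (Q * K) * Ci"
      proof -
        have QC: "Q * cadj C \<in> carrier_mat n n" using Q cC by simp
        have X: "cadj Ci * (Q * cadj C) \<in> carrier_mat n n" using cCi QC by simp
        have "cadj Ci * (Q * K) * Ci = cadj Ci * ((Q * cadj C) * C) * Ci"
          unfolding K_def using assoc_mult_mat[OF Q cC C] by simp
        also have "\<dots> = (cadj Ci * (Q * cadj C)) * (C * Ci)"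
          using assoc_mult_mat[OF cCi QC C, symmetric] assoc_mult_mat[OF X C Ci] by simp
        finally show ?thesis using CCi right_mult_one_mat[OF X] by simp
      qed
      finally show ?thesis .
    qed
    have 2: "G0 * B = cadj Ci * (K * Q) * Ci"
    proof -
      have "cadj Ci * (K * Q) = ((cadj Ci * cadj C) * C) * Q"
        unfolding K_def using assoc_mult_mat[OF cCi mult_carrier_mat[OF cC C] Q, symmetric]
          assoc_mult_mat[OF cCi cC C, symmetric] by simp
      also have "\<dots> = C * Q" using hC(6) left_mult_one_mat[OF C] by simp
      finally show ?thesis using G0B by simp
    qed
    have "cadj (G0 * B) = G0 * B \<longleftrightarrow> cadj Ci * (Q * K) * Ci = cadj Ci * (K * Q) * Ci" using 1 2 by simp
    thus ?thesis using inj_conj[OF cC cCi hC(7) C Ci CiC mult_carrier_mat[OF Q K] mult_carrier_mat[OF K Q]] by auto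
  qed
  have F3: "H * P = P * H \<longleftrightarrow> colspace (H * M) = colspace M"
    unfolding P_def Mp_def H_def by (rule comm_iff_cs[OF hA(1) hA(5) hA(2) hA(3) hA(4) M])
  have F4: "K * Q = Q * K \<longleftrightarrow> colspace (K * cadj M) = colspace (cadj M)"
    unfolding Q_def Mp_def mp_right_proj[OF M] K_def by (rule comm_iff_cs[OF hCh(1) hCh(5) hCh(2) hCh(3) hCh(4) cM])
  have L1: "colspace (H * M) = colspace M \<longleftrightarrow> R1"
  proof -
    have AhAB: "cadj A * A * B \<in> carrier_mat m n" by (rule mult_carrier_mat[OF mult_carrier_mat[OF cA A] B])
    have AB: "A * B \<in> carrier_mat m n" by (rule mult_carrier_mat[OF A B])
    have AX: "A * (cadj A * A * B) \<in> carrier_mat m n" by (rule mult_carrier_mat[OF A AhAB])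
    have "H * M = (A * cadj A) * ((A * B) * C)" unfolding H_def M_def ..
    also have "\<dots> = ((A * cadj A) * (A * B)) * C" using assoc_mult_mat[OF hA(1) AB C] by simp
    also have "(A * cadj A) * (A * B) = A * (cadj A * A * B)"
      using assoc_mult_mat[OF A cA AB] assoc_mult_mat[OF cA A B] by simp
    finally have e: "colspace (H * M) = colspace (A * (cadj A * A * B))" using cs_right_inv[OF AX C Ci CCi] by simp
    have e2: "colspace M = colspace (A * B)" unfolding M_def using cs_right_inv[OF AB C Ci CCi] by simp
    show ?thesis unfolding e e2 R1_def by (rule cs_left_iff[OF A Ai AiA AhAB B])
  qed
  have L2: "colspace (K * cadj M) = colspace (cadj M) \<longleftrightarrow> R2"
  proof -
    have CChBh: "C * cadj C * cadj B \<in> carrier_mat n m" by (rule mult_carrier_mat[OF mult_carrier_mat[OF C cC] cB])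
    have BhAh: "cadj B * cadj A \<in> carrier_mat n m" by (rule mult_carrier_mat[OF cB cA])
    have ChBh: "cadj C * cadj B \<in> carrier_mat n m" by (rule mult_carrier_mat[OF cC cB])
    have X: "cadj C * (C * cadj C * cadj B) \<in> carrier_mat n m" by (rule mult_carrier_mat[OF cC CChBh])
    have Mh: "cadj M = cadj C * (cadj B * cadj A)"
    proof -
      have "cadj M = cadj C * cadj (A * B)" unfolding M_def by (rule cadj_mult) (use A B C in simp)
      also have "cadj (A * B) = cadj B * cadj A" by (rule cadj_mult) (use A B in simp)
      finally show ?thesis .
    qed
    have e2: "colspace (cadj M) = colspace (cadj C * cadj B)"
      unfolding Mh using assoc_mult_mat[OF cC cB cA] cs_right_inv[OF ChBh cA cAi hA(7)] by simp
    have "K * cadj M = (cadj C * C) * (cadj C * (cadj B * cadj A))" unfolding K_def Mh ..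
    also have "\<dots> = (cadj C * (C * cadj C * cadj B)) * cadj A"
      using assoc_mult_mat[OF cC C mult_carrier_mat[OF cC BhAh]] assoc_mult_mat[OF C cC BhAh, symmetric]
        assoc_mult_mat[OF mult_carrier_mat[OF C cC] cB cA, symmetric]
        assoc_mult_mat[OF cC CChBh cA, symmetric] by simp
    finally have e: "colspace (K * cadj M) = colspace (cadj C * (C * cadj C * cadj B))"
      using cs_right_inv[OF X cA cAi hA(7)] by simp
    show ?thesis unfolding e e2 R2_def by (rule cs_left_iff[OF cC cCi hC(6) CChBh cB])
  qed
  have S3: "cadj (B * G0) = B * G0 \<longleftrightarrow> R1" using T3 F3 L1 by simp
  have S4: "cadj (G0 * B) = G0 * B \<longleftrightarrow> R2" using T4 F4 L2 by simp
  have G0in: "G0 \<in> gen_inv I B \<longleftrightarrow> ((3 \<in> I \<longrightarrow> R1) \<and> (4 \<in> I \<longrightarrow> R2))" for I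
    unfolding gen_inv_def using G0 E1 E2 S3 S4 carrier_matD[OF B] by auto
  have tr: "mp_inv M \<in> trans_gen_inv C I B A \<longleftrightarrow> ((3 \<in> I \<longrightarrow> R1) \<and> (4 \<in> I \<longrightarrow> R2))" for I
    using key G0in unfolding Mp_def by simp
  have Bp: "mp_inv B \<in> carrier_mat n m" by (rule mp_props(1)[OF B])
  have i64: "(mp_inv M = mat_inv C * mp_inv B * mat_inv A) \<longleftrightarrow> R1 \<and> R2"
  proof -
    have "(Mp = Ci * mp_inv B * Ai) \<longleftrightarrow> G0 = mp_inv B"
    proof
      assume "Mp = Ci * mp_inv B * Ai"
      thus "G0 = mp_inv B" unfolding G0_def using cancel_both[OF Ci C CCi Bp Ai A AiA] by simp
    next
      assume "G0 = mp_inv B" thus "Mp = Ci * mp_inv B * Ai" using hMp by simp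
    qed
    also have "\<dots> \<longleftrightarrow> G0 \<in> gen_inv {1,2,3,4} B" using mp_eqI[OF B] mp_gen[OF B] by metis
    also have "\<dots> \<longleftrightarrow> R1 \<and> R2" using G0in by simp
    finally show ?thesis unfolding Mp_def Ci_def Ai_def .
  qed
  have iii64: "(colspace (A * cadj A * M) = colspace M \<and> colspace (cadj C * C * cadj M) = colspace (cadj M)) \<longleftrightarrow> R1 \<and> R2"
    using L1 L2 unfolding H_def K_def by simp
  have AhAB: "cadj A * A * B \<in> carrier_mat m n" by (rule mult_carrier_mat[OF mult_carrier_mat[OF cA A] B])
  have CChBh: "C * cadj C * cadj B \<in> carrier_mat n m" by (rule mult_carrier_mat[OF mult_carrier_mat[OF C cC] cB])
  have iv64: "((cadj A * A * B) * mp_inv (cadj A * A * B) = B * mp_inv B \<and>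
      mp_inv (B * C * cadj C) * (B * C * cadj C) = mp_inv B * B) \<longleftrightarrow> R1 \<and> R2"
  proof -
    have W: "B * C * cadj C \<in> carrier_mat m n" by (rule mult_carrier_mat[OF mult_carrier_mat[OF B C] cC])
    have cW: "cadj (B * C * cadj C) = C * cadj C * cadj B"
    proof -
      have "cadj (B * C * cadj C) = C * cadj (B * C)" using cadj_mult[of "B * C" "cadj C"] B C by simp
      also have "cadj (B * C) = cadj C * cadj B" by (rule cadj_mult) (use B C in simp)
      finally show ?thesis using assoc_mult_mat[OF C cC cB] by simp
    qed
    have "mp_inv (B * C * cadj C) * (B * C * cadj C) = mp_inv B * B \<longleftrightarrow>
        (C * cadj C * cadj B) * mp_inv (C * cadj C * cadj B) = cadj B * mp_inv (cadj B)"
      using mp_right_proj[OF W] mp_right_proj[OF B] cW by simp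
    also have "\<dots> \<longleftrightarrow> R2" unfolding R2_def by (rule cs_eq_proj[OF CChBh cB, symmetric])
    finally have 2: "mp_inv (B * C * cadj C) * (B * C * cadj C) = mp_inv B * B \<longleftrightarrow> R2" .
    have 1: "(cadj A * A * B) * mp_inv (cadj A * A * B) = B * mp_inv B \<longleftrightarrow> R1"
      unfolding R1_def by (rule cs_eq_proj[OF AhAB B, symmetric])
    show ?thesis using 1 2 by simp
  qed
  have v64: "(EP (cadj A * A * B * cadj B) \<and> EP (cadj B * B * C * cadj C)) \<longleftrightarrow> R1 \<and> R2"
  proof -
    have 1: "EP (cadj A * A * B * cadj B) \<longleftrightarrow> R1" unfolding R1_def by (rule EP1[OF hAh(1) hAh(5) hAh(2) hAh(3) B])
    have "cadj B * B * C * cadj C = (cadj B * B) * (C * cadj C)"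
      by (rule assoc_mult_mat[OF mult_carrier_mat[OF cB B] C cC])
    hence 2: "EP (cadj B * B * C * cadj C) \<longleftrightarrow> R2" unfolding R2_def using EP2[OF hC(1) hC(5) hC(2) hC(3) B] by simp
    show ?thesis using 1 2 by simp
  qed
  have vi64: "(EP (A * cadj A * M * cadj M) \<and> EP (cadj M * M * cadj C * C)) \<longleftrightarrow> R1 \<and> R2"
  proof -
    have 1: "EP (A * cadj A * M * cadj M) \<longleftrightarrow> R1" using EP1[OF hA(1) hA(5) hA(2) hA(3) M] L1 unfolding H_def by simp
    have "cadj M * M * cadj C * C = (cadj M * M) * (cadj C * C)"
      by (rule assoc_mult_mat[OF mult_carrier_mat[OF cM M] cC C])
    hence 2: "EP (cadj M * M * cadj C * C) \<longleftrightarrow> R2" using EP2[OF hCh(1) hCh(5) hCh(2) hCh(3) M] L2 unfolding K_def by simp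
    show ?thesis using 1 2 by simp
  qed
  show ?thesis using tr[of "{1}"] tr[of "{1,2}"] tr[of "{1,3}"] tr[of "{1,4}"] tr[of "{1,2,3}"] tr[of "{1,2,4}"]
    tr[of "{1,3,4}"] i64 iii64 iv64 v64 vi64 by simp
qed

end
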